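(* Let $(|B(\lambda)\rangle,\mathcal{M})$ be an $N$-regular quantum scenario. Then the $N$ measurement angles in $M_1$ are evenly spaced modulo $\pi$ with adjacent angles differing by $\frac{\pi}{N}$, and likewise for $M_2$. Consequently, up to equivalence, $M_1=\{\frac{k\pi}{N}:k=0,\dots,N-1\}$ and $M_2=\{\frac{k\pi}{N}+\mu \bmod \pi:k=0,\dots,N-1\}$ for some $\mu\in[0,\pi)$.
   Context: $\equiv$ is equality modulo $2\pi$; $\oplus$ is addition mod 2. For $\varphi\in\mathbb{R}$, $E_\varphi=\cos\varphi X+\sin\varphi Y$, with $+1$ eigenvector $|\varphi\rangle=\frac{1}{\sqrt2}(|0\rangle+e^{i\varphi}|1\rangle)$ and $-1$ eigenvector $|\varphi+\pi\rangle$; outcomes $+1,-1$ relabelled $0,1$; measurements identified with angles. A measurement scenario $\mathcal{M}=(M_1,M_2,M_3)$ consists of finite sets $M_i\subseteq[0,\pi)$ of angles for qubit $i$. For a three-qubit state $|\psi\rangle$, the event $(A,B,C)\to(a,b,c)$ is impossible if $(\langle A+a\pi|\otimes\langle B+b\pi|\otimes\langle C+c\pi|)|\psi\rangle=0$. Equivalence: $(|\psi\rangle,\mathcal{M})$ and $(|\psi'\rangle,\mathcal{M}')$ are equivalent if, after possibly permuting qubit labels, there is a local unitary $U=U_1\otimes U_2\otimes U_3$ with $U|\psi\rangle=|\psi'\rangle$ and $\{\varphi'\bmod\pi: U_iE_\varphi U_i^\dagger=\pm E_{\varphi'},\varphi\in M_i\}=M'_i$ for each $i$. For $\lambda\in[0,\frac{\pi}{2})$,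 $|v_\lambda\rangle=\cos\frac{\lambda}{2}|0\rangle+\sin\frac{\lambda}{2}|1\rangle$, $|w_\lambda\rangle=\sin\frac{\lambda}{2}|0\rangle+\cos\frac{\lambda}{2}|1\rangle$, $|B(\lambda)\rangle=\frac{1}{\sqrt2}(|00\rangle|v_\lambda\rangle+|11\rangle|w_\lambda\rangle)$. Define modulo $2\pi$: $\beta(\lambda,\varphi)=\varphi-2\arctan\left(\frac{\cos\frac{\lambda}{2}\sin\varphi}{\sin\frac{\lambda}{2}+\cos\frac{\lambda}{2}\cos\varphi}\right)$. For $|B(\lambda)\rangle$, $(A,B,C)\to(a,b,c)$ is impossible iff $A+B\equiv\beta(\lambda,C+c\pi)+(1\oplus a\oplus b)\pi$. $(|B(\lambda)\rangle,\mathcal{M})$ is maximally impossible if for every $C\in M_3$ and $z\in\{0,1\}$: every $A\in M_1$ admits $B\in M_2$, $a,b$ with $(A,B,C)\to(a,b,z)$ impossible, and every $B\in M_2$ admits $A\in M_1$, $a,b$ with $(A,B,C)\to(a,b,z)$ impossible. Then $|M_1|=|M_2|=:N$; write $M_1=\{A_0,\dots,A_{N-1}\}$, $M_2=\{B_0,\dots,B_{N-1}\}$, $M_3=\{C_0,\dots,C_{n-1}\}$; for each $(j,l,z)$ there is a unique $k=:K(j,l,z)$ with $A_j+B_k-\beta(\lambda,C_l+z\pi)$ an integer multiple of $\pi$, and $r(j,l,z)\in\{0,1\}$ is defined by $A_j+B_{K(j,l,z)}-\beta(\lambda,C_l+z\pi)\equiv r(j,l,z)\pi$. $\Psi_l(z)$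 is the $\mathbb{Z}_2$-linear system $\{a_j\oplus b_{K(j,l,z)}=r(j,l,z):j=0,\dots,N-1\}$ in unknowns $a_0,\dots,a_{N-1},b_0,\dots,b_{N-1}$. With $n=2$, maximal rank means for all $z_0,z_1$ the coefficient matrix of $\Psi_0(z_0)\cup\Psi_1(z_1)$ has rank $2N-1$ over $\mathbb{Z}_2$. $N$-regular: maximally impossible and of maximal rank, with $|M_1|=|M_2|=N$ and $M_3=\{C_0,C_1\}$. *)

theory Defs
  imports "HOL-Analysis.Analysis" "HOL-Library.Z2" "Jordan_Normal_Form.DL_Rank"
begin

definition rmod :: "real \<Rightarrow> real \<Rightarrow> real" where
  "rmod x p = x - p * of_int \<lfloor>x / p\<rfloor>"

text \<open>outcome bit (False = 0 = +1, True = 1 = -1) as angle shift\<close>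
definition obit :: "bool \<Rightarrow> real" where
  "obit a = (if a then pi else 0)"

definition ket_ang :: "real \<Rightarrow> bool \<Rightarrow> complex" where
  "ket_ang phi x = (if x then cis phi else 1) / complex_of_real (sqrt 2)"

text \<open>E_phi = cos phi X + sin phi Y, entries (row, column)\<close>
definition Emat :: "real \<Rightarrow> bool \<Rightarrow> bool \<Rightarrow> complex" where
  "Emat phi x y = (if x = y then 0 else if x then cis phi else cis (- phi))"

definition unitary2 :: "(bool \<Rightarrow> bool \<Rightarrow> complex) \<Rightarrow> bool" where
  "unitary2 U \<longleftrightarrow> (\<forall>i j. (\<Sum>k\<in>UNIV. cnj (U k i) * U k j) = (if i = j then 1 else 0))"

definition conjop :: "(bool \<Rightarrow> bool \<Rightarrow> complex) \<Rightarrow> (bool \<Rightarrow> bool \<Rightarrow> complex) \<Rightarrow> bool \<Rightarrow> bool \<Rightarrow> complex" where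
  "conjop U E x y = (\<Sum>k\<in>UNIV. \<Sum>l\<in>UNIV. U x k * E k l * cnj (U y l))"

definition angle_image :: "(bool \<Rightarrow> bool \<Rightarrow> complex) \<Rightarrow> real set \<Rightarrow> real set" where
  "angle_image U M = {rmod phi' pi | phi phi'. phi \<in> M \<and>
      (conjop U (Emat phi) = Emat phi' \<or> conjop U (Emat phi) = (\<lambda>x y. - Emat phi' x y))}"

type_synonym state3 = "bool \<Rightarrow> bool \<Rightarrow> bool \<Rightarrow> complex"

definition impossible :: "state3 \<Rightarrow> real \<Rightarrow> real \<Rightarrow> real \<Rightarrow> bool \<Rightarrow> bool \<Rightarrow> bool \<Rightarrow> bool" where
  "impossible psi A B C a b c \<longleftrightarrow>
     (\<Sum>x\<in>UNIV. \<Sum>y\<in>UNIV. \<Sum>z\<in>UNIV.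
        cnj (ket_ang (A + obit a) x) * cnj (ket_ang (B + obit b) y) * cnj (ket_ang (C + obit c) z)
        * psi x y z) = 0"

definition vlam :: "real \<Rightarrow> bool \<Rightarrow> complex" where
  "vlam lam z = (if z then complex_of_real (sin (lam / 2)) else complex_of_real (cos (lam / 2)))"

definition wlam :: "real \<Rightarrow> bool \<Rightarrow> complex" where
  "wlam lam z = (if z then complex_of_real (cos (lam / 2)) else complex_of_real (sin (lam / 2)))"

definition Bstate :: "real \<Rightarrow> state3" where
  "Bstate lam x y z =
     (if x = y then (if x then wlam lam z else vlam lam z) / complex_of_real (sqrt 2) else 0)"

text \<open>beta(lambda, phi); when the denominator vanishes the arctan is +-pi/2,
  and 2 arctan = +-pi, which agree modulo 2 pi; we pick pi.\<close>
definition beta :: "real \<Rightarrow> real \<Rightarrow> real" where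
  "beta lam phi =
     (let den = sin (lam / 2) + cos (lam / 2) * cos phi in
      if den = 0 then phi - pi
      else phi - 2 * arctan (cos (lam / 2) * sin phi / den))"

definition meas_scenario :: "real set \<Rightarrow> real set \<Rightarrow> real set \<Rightarrow> bool" where
  "meas_scenario M1 M2 M3 \<longleftrightarrow>
     (\<forall>M \<in> {M1, M2, M3}. finite M \<and> M \<subseteq> {0..<pi})"

definition max_impossible :: "real \<Rightarrow> real set \<Rightarrow> real set \<Rightarrow> real set \<Rightarrow> bool" where
  "max_impossible lam M1 M2 M3 \<longleftrightarrow>
     (\<forall>C\<in>M3. \<forall>z.
        (\<forall>A\<in>M1. \<exists>B\<in>M2. \<exists>a b. impossible (Bstate lam) A B C a b z) \<and>
        (\<forall>B\<in>M2. \<exists>A\<in>M1. \<exists>a b. impossible (Bstate lam) A B C a b z))"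

definition Kidx :: "real \<Rightarrow> nat \<Rightarrow> (nat \<Rightarrow> real) \<Rightarrow> (nat \<Rightarrow> real) \<Rightarrow> (nat \<Rightarrow> real)
                    \<Rightarrow> nat \<Rightarrow> nat \<Rightarrow> bool \<Rightarrow> nat" where
  "Kidx lam N As Bs Cs j l z =
     (THE k. k < N \<and> (\<exists>m::int. As j + Bs k - beta lam (Cs l + obit z) = pi * of_int m))"

text \<open>Coefficient matrix of Psi_0(z0) union Psi_1(z1) over Z_2: row l*N + j is the
  equation a_j + b_{K(j,l,z_l)} = r; column c < N is a_c, column N + k is b_k.\<close>
definition coeff_mat :: "real \<Rightarrow> nat \<Rightarrow> (nat \<Rightarrow> real) \<Rightarrow> (nat \<Rightarrow> real) \<Rightarrow> (nat \<Rightarrow> real)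
                         \<Rightarrow> bool \<Rightarrow> bool \<Rightarrow> bit mat" where
  "coeff_mat lam N As Bs Cs z0 z1 =
     mat (2 * N) (2 * N) (\<lambda>(r, c).
        let l = r div N; j = r mod N; zl = (if l = 0 then z0 else z1) in
        if c = j \<or> c = N + Kidx lam N As Bs Cs j l zl then 1 else 0)"

definition max_rank :: "real \<Rightarrow> nat \<Rightarrow> (nat \<Rightarrow> real) \<Rightarrow> (nat \<Rightarrow> real) \<Rightarrow> (nat \<Rightarrow> real) \<Rightarrow> bool" where
  "max_rank lam N As Bs Cs \<longleftrightarrow>
     (\<forall>z0 z1. vec_space.rank (2 * N) (coeff_mat lam N As Bs Cs z0 z1) = 2 * N - 1)"

definition N_regular :: "nat \<Rightarrow> real \<Rightarrow> real set \<Rightarrow> real set \<Rightarrow> real set \<Rightarrow> bool" where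
  "N_regular N lam M1 M2 M3 \<longleftrightarrow>
     0 \<le> lam \<and> lam < pi / 2 \<and> meas_scenario M1 M2 M3 \<and>
     max_impossible lam M1 M2 M3 \<and>
     card M1 = N \<and> card M2 = N \<and> card M3 = 2 \<and>
     (\<exists>As Bs Cs. bij_betw As {..<N} M1 \<and> bij_betw Bs {..<N} M2 \<and> bij_betw Cs {..<2} M3 \<and>
        max_rank lam N As Bs Cs)"

definition scen :: "real set \<Rightarrow> real set \<Rightarrow> real set \<Rightarrow> nat \<Rightarrow> real set" where
  "scen M1 M2 M3 i = (if i = 0 then M1 else if i = 1 then M2 else M3)"

text \<open>relabel qubits by a permutation p of {0,1,2}: old qubit j becomes new qubit p j\<close>
definition relabel :: "(nat \<Rightarrow> nat) \<Rightarrow> state3 \<Rightarrow> state3" where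
  "relabel p psi x0 x1 x2 = (let x = (\<lambda>i. [x0, x1, x2] ! i) in psi (x (p 0)) (x (p 1)) (x (p 2)))"

definition apply3 :: "(bool \<Rightarrow> bool \<Rightarrow> complex) \<Rightarrow> (bool \<Rightarrow> bool \<Rightarrow> complex) \<Rightarrow> (bool \<Rightarrow> bool \<Rightarrow> complex)
                      \<Rightarrow> state3 \<Rightarrow> state3" where
  "apply3 U1 U2 U3 psi x y z =
     (\<Sum>x'\<in>UNIV. \<Sum>y'\<in>UNIV. \<Sum>z'\<in>UNIV. U1 x x' * U2 y y' * U3 z z' * psi x' y' z')"

definition equivalent :: "state3 \<Rightarrow> (nat \<Rightarrow> real set) \<Rightarrow> state3 \<Rightarrow> (nat \<Rightarrow> real set) \<Rightarrow> bool" where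
  "equivalent psi M psi' M' \<longleftrightarrow>
     (\<exists>p U. p permutes {0, 1, 2} \<and> (\<forall>i<3. unitary2 (U i)) \<and>
        apply3 (U 0) (U 1) (U 2) (relabel p psi) = psi' \<and>
        (\<forall>i<3. angle_image (U i) (M (inv_into UNIV p i)) = M' i))"

definition evenly_spaced :: "nat \<Rightarrow> real set \<Rightarrow> bool" where
  "evenly_spaced N M \<longleftrightarrow> (\<exists>theta. M = (\<lambda>k. rmod (theta + real k * pi / real N) pi) ` {..<N})"

end

theory Submission imports Defs begin

lemma rmod_range: assumes "p > 0" shows "0 \<le> rmod x p" "rmod x p < p"
proof -
  have "of_int \<lfloor>x / p\<rfloor> \<le> x / p" "x / p < of_int \<lfloor>x / p\<rfloor> + 1" by linarith+
  have "p * of_int \<lfloor>x / p\<rfloor> \<le> p * (x / p)" "p * (x / p) < p * (of_int \<lfloor>x / p\<rfloor> + 1)"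
    using assms mult_left_mono[OF \<open>of_int \<lfloor>x / p\<rfloor> \<le> x / p\<close>, of p]
      mult_strict_left_mono[OF \<open>x / p < of_int \<lfloor>x / p\<rfloor> + 1\<close>, of p] by auto
  then have "p * of_int \<lfloor>x / p\<rfloor> \<le> x" "x < p * of_int \<lfloor>x / p\<rfloor> + p"
    using assms by (simp_all add: field_simps)
  then show "0 \<le> rmod x p" "rmod x p < p" unfolding rmod_def by linarith+
qed

lemma rmod_id: assumes "0 \<le> x" "x < p" shows "rmod x p = x"
proof -
  have "\<lfloor>x / p\<rfloor> = 0" using assms by (simp add: floor_eq_iff field_simps)
  then show ?thesis by (simp add: rmod_def)
qed

lemma rmod_add_int: assumes "p > 0" shows "rmod (x + p * of_int m) p = rmod x p"
proof -
  have "(x + p * of_int m) / p = x / p + of_int m" using assms by (simp add: field_simps)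
  then show ?thesis unfolding rmod_def by (simp add: algebra_simps)
qed

lemma rmod_eq_iff: assumes "p > 0"
  shows "rmod x p = rmod y p \<longleftrightarrow> (\<exists>m::int. x - y = p * of_int m)"
proof
  assume "rmod x p = rmod y p"
  then have "x - y = p * of_int (\<lfloor>x / p\<rfloor> - \<lfloor>y / p\<rfloor>)" unfolding rmod_def by (simp add: algebra_simps)
  then show "\<exists>m::int. x - y = p * of_int m" by blast
next
  assume "\<exists>m::int. x - y = p * of_int m"
  then obtain m :: int where "x = y + p * of_int m" by (auto simp: algebra_simps)
  then show "rmod x p = rmod y p" using rmod_add_int[OF assms] by simp
qed

lemma rmod_ex: "\<exists>m::int. rmod x p = x + p * of_int m"
  unfolding rmod_def by (rule exI[of _ "- \<lfloor>x / p\<rfloor>"]) simp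

lemma rmod_rmod_add: assumes "p > 0" shows "rmod (rmod x p + y) p = rmod (x + y) p"
proof -
  obtain m :: int where "rmod x p = x + p * of_int m" using rmod_ex by blast
  then show ?thesis using rmod_add_int[OF assms, of "x + y" m] by (simp add: algebra_simps)
qed

lemma modpi_eq: assumes "0 \<le> x" "x < pi" "0 \<le> y" "y < pi" "x - y = pi * of_int m"
  shows "x = y"
proof -
  have a: "pi * of_int m < pi * 1" using assms by linarith
  have b: "pi * (-1) < pi * of_int m" using assms by linarith
  have "of_int m < (1::real)" using a by (metis mult_less_cancel_left_pos pi_gt_zero)
  moreover have "-1 < (of_int m::real)" using b by (metis mult_less_cancel_left_pos pi_gt_zero)
  ultimately have "m < 1" "-1 < m" by simp_all
  then have "m = 0" by linarith
  then show ?thesis using assms by simp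
qed

lemma sumbool: "(\<Sum>x\<in>(UNIV::bool set). f x) = f False + f True"
  by (simp add: UNIV_bool add.commute)

lemma impossible_expand:
  "impossible (Bstate lam) A B C a b z \<longleftrightarrow>
    (complex_of_real (cos (lam/2)) + complex_of_real (sin (lam/2)) * cis (- (C + obit z))
     + cis (- (A + obit a + (B + obit b))) *
       (complex_of_real (sin (lam/2)) + complex_of_real (cos (lam/2)) * cis (- (C + obit z))) = 0)"
proof -
  define c where "c = complex_of_real (cos (lam/2))"
  define s where "s = complex_of_real (sin (lam/2))"
  define r where "r = complex_of_real (sqrt 2)"
  have r2: "r * r = 2" unfolding r_def by (simp flip: of_real_mult)
  have cnjr: "cnj r = r" unfolding r_def by simp
  have rnz: "r \<noteq> 0" unfolding r_def by simp
  have "(\<Sum>x\<in>UNIV. \<Sum>y\<in>UNIV. \<Sum>w\<in>UNIV.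
        cnj (ket_ang (A + obit a) x) * cnj (ket_ang (B + obit b) y) * cnj (ket_ang (C + obit z) w)
        * Bstate lam x y w) =
     (c + s * cis (- (C + obit z)) + cis (- (A + obit a + (B + obit b))) * (s + c * cis (- (C + obit z)))) / (r*r*r*r)"
    unfolding sumbool
    unfolding ket_ang_def Bstate_def vlam_def wlam_def c_def[symmetric] s_def[symmetric] r_def[symmetric]
    apply (simp add: cis_cnj cnjr)
    apply (simp only: cis_mult[symmetric] add_divide_distrib ring_distribs)
    apply (simp add: algebra_simps)
    done
  then show ?thesis unfolding impossible_def c_def s_def using rnz by simp
qed


lemma sin_zero_int: assumes "sin x = 0" shows "\<exists>m::int. x = pi * of_int m"
proof -
  have "\<exists>i::int. x = of_int i * pi" using assms by (simp only: sin_zero_iff_int2)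
  then show ?thesis by (auto simp: mult.commute)
qed

lemma phase_lemma:
  fixes c s t D :: real
  assumes cpos: "c > 0" and snn: "s \<ge> 0" and snc: "s \<noteq> c"
    and E: "complex_of_real c + complex_of_real s * cis (- t) + cis (- D) * (complex_of_real s + complex_of_real c * cis (- t)) = 0"
  shows "\<exists>m::int. D - (if s + c * cos t = 0 then t - pi else t - 2 * arctan (c * sin t / (s + c * cos t))) = pi * of_int m"
proof -
  define x where "x = s + c * cos t"
  define y where "y = c * sin t"
  define ph where "ph = t - D"
  have "cis t * (complex_of_real c + complex_of_real s * cis (- t) + cis (- D) * (complex_of_real s + complex_of_real c * cis (- t)))
      = (complex_of_real s + complex_of_real c * cis t) + cis ph * (complex_of_real s + complex_of_real c * cis (- t))"
    unfolding ph_def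
  proof -
    have l: "\<And>a b x::complex. a * (x * b) = x * (a * b)" by (rule mult.left_commute)
    have e1: "cis t * (complex_of_real s * cis (- D)) = complex_of_real s * cis (t - D)"
      by (subst l) (simp add: cis_mult)
    have e2: "cis t * (complex_of_real s * cis (- t)) = complex_of_real s"
      by (subst l) (simp add: cis_mult)
    have e3: "cis t * (complex_of_real c * cis (- D - t)) = complex_of_real c * cis (- D)"
      by (subst l) (simp add: cis_mult)
    show "cis t * (complex_of_real c + complex_of_real s * cis (- t) + cis (- D) * (complex_of_real s + complex_of_real c * cis (- t))) =
    complex_of_real s + complex_of_real c * cis t + cis (t - D) * (complex_of_real s + complex_of_real c * cis (- t))"
      by (simp add: algebra_simps cis_mult e1 e2 e3)
  qed
  then have W: "(complex_of_real s + complex_of_real c * cis t) + cis ph * (complex_of_real s + complex_of_real c * cis (- t)) = 0"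
    using E by simp
  have ReW: "x + cos ph * x + sin ph * y = 0"
    using arg_cong[OF W, of Re] unfolding x_def y_def by (simp add: algebra_simps)
  have ImW: "y + sin ph * x - cos ph * y = 0"
    using arg_cong[OF W, of Im] unfolding x_def y_def by (simp add: algebra_simps)
  have key: "2 * x * y * cos ph - (x^2 - y^2) * sin ph = 0"
  proof -
    have "2 * x * y * cos ph - (x^2 - y^2) * sin ph = y * (x + cos ph * x + sin ph * y) - x * (y + sin ph * x - cos ph * y)"
      by (simp add: algebra_simps power2_eq_square)
    then show ?thesis using ReW ImW by simp
  qed
  show ?thesis
  proof (cases "x = 0")
    case True
    have "y \<noteq> 0"
    proof
      assume "y = 0"
      then have st: "sin t = 0" using cpos unfolding y_def by simp
      then have "cos t = 1 \<or> cos t = -1" using sin_cos_squared_add[of t] by (simp add: power2_eq_1_iff)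
      then show False using True snn cpos snc unfolding x_def by auto
    qed
    then have "sin ph = 0" using ReW True by simp
    then have "sin (D - (t - pi)) = 0" unfolding ph_def by (simp add: sin_diff algebra_simps)
    then show ?thesis using True unfolding x_def by (simp add: sin_zero_int)
  next
    case False
    define q where "q = y / x"
    define u where "u = arctan q"
    have q1: "1 + q^2 > 0" by (simp add: add_pos_nonneg)
    have su: "sin u = q / sqrt (1 + q^2)" unfolding u_def by (simp add: sin_arctan)
    have cu: "cos u = 1 / sqrt (1 + q^2)" unfolding u_def by (simp add: cos_arctan)
    have sq: "sqrt (1 + q^2) * sqrt (1 + q^2) = 1 + q^2" using q1 by simp
    have s2u: "sin (2 * u) = 2 * q / (1 + q^2)"
    proof -
      have "sin (2 * u) = 2 * q / (sqrt (1 + q^2) * sqrt (1 + q^2))" unfolding sin_double su cu by simp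
      then show ?thesis by (simp only: sq)
    qed
    have c2u: "cos (2 * u) = (1 - q^2) / (1 + q^2)"
    proof -
      have "cos (2 * u) = (1 - q^2) / (sqrt (1 + q^2) * sqrt (1 + q^2))" unfolding cos_double su cu
        by (simp add: power_divide diff_divide_distrib)
      then show ?thesis by (simp only: sq)
    qed
    have "sin (2 * u - ph) * (1 + q^2) * x^2 = 2 * x * y * cos ph - (x^2 - y^2) * sin ph"
    proof -
      have "sin (2 * u - ph) * (1 + q^2) = 2 * q * cos ph - (1 - q^2) * sin ph"
        unfolding sin_diff s2u c2u using q1 by (simp add: divide_simps)
      moreover have "(2 * q * cos ph - (1 - q^2) * sin ph) * x^2 = 2 * x * y * cos ph - (x^2 - y^2) * sin ph"
        unfolding q_def using False by (simp add: divide_simps power2_eq_square)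
      ultimately show ?thesis by simp
    qed
    then have "sin (2 * u - ph) = 0" using key q1 False by simp
    moreover have "D - (t - 2 * arctan (c * sin t / (s + c * cos t))) = 2 * u - ph"
      unfolding u_def q_def ph_def x_def y_def by simp
    ultimately show ?thesis using False unfolding x_def by (simp add: sin_zero_int)
  qed
qed

lemma imp_beta:
  assumes l0: "0 \<le> lam" and l1: "lam < pi / 2" and imp: "impossible (Bstate lam) A B C a b z"
  shows "\<exists>m::int. A + B - beta lam (C + obit z) = pi * of_int m"
proof -
  define c where "c = cos (lam / 2)"
  define s where "s = sin (lam / 2)"
  have cpos: "c > 0" unfolding c_def using l0 l1 by (intro cos_gt_zero_pi) auto
  have snn: "s \<ge> 0" unfolding s_def using l0 l1 by (intro sin_ge_zero) auto
  have "cos (lam / 2 + pi / 4) > 0" using l0 l1 by (intro cos_gt_zero_pi) auto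
  then have "(c - s) * (sqrt 2 / 2) > 0" unfolding c_def s_def cos_add cos_45 sin_45
    by (simp add: algebra_simps)
  then have snc: "s \<noteq> c" by auto
  have E: "complex_of_real c + complex_of_real s * cis (- (C + obit z))
     + cis (- (A + obit a + (B + obit b))) *
       (complex_of_real s + complex_of_real c * cis (- (C + obit z))) = 0"
    using imp unfolding impossible_expand c_def s_def .
  obtain m :: int where m: "(A + obit a + (B + obit b)) - beta lam (C + obit z) = pi * of_int m"
    using phase_lemma[OF cpos snn snc E] unfolding beta_def Let_def c_def s_def by blast
  have "A + B - beta lam (C + obit z) = pi * of_int (m - (if a then 1 else 0) - (if b then 1 else 0))"
  proof -
    have oa: "obit a = pi * of_int (if a then 1 else 0 :: int)" "obit b = pi * of_int (if b then 1 else 0 :: int)"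
      by (simp_all add: obit_def)
    have "A + B - beta lam (C + obit z) = pi * of_int m - obit a - obit b" using m by linarith
    then show ?thesis unfolding oa by (simp add: algebra_simps)
  qed
  then show ?thesis by blast
qed

context vec_space
begin

lemma rank_le_span_card:
  assumes A: "A \<in> carrier_mat n nc" and W: "W \<subseteq> carrier_vec n" "finite W"
    and cs: "set (cols A) \<subseteq> span W"
  shows "rank A \<le> card W"
proof -
  obtain S where S: "maximal S (\<lambda>T. T \<subseteq> set (cols A) \<and> lin_indpt T)"
    using maximal_exists[of "(\<lambda>T. T \<subseteq> set (cols A) \<and> lin_indpt T)" "card (set (cols A))" "{}"]
    by (meson List.finite_set card_mono empty_iff empty_subsetI finite_lin_indpt2 rev_finite_subset)
  then have Ssub: "S \<subseteq> set (cols A)" and Sli: "lin_indpt S" by (simp_all add: maximal_def)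
  have Sfin: "finite S" using Ssub List.finite_set rev_finite_subset by blast
  have "S \<subseteq> span W" using Ssub cs by blast
  then obtain C :: "'a vec set" where "int (card C) \<le> int (card W) - int (card S)"
    using replacement[OF Sfin W(2) W(1) Sli \<open>S \<subseteq> span W\<close>] by blast
  then have "card S \<le> card W" by linarith
  then show ?thesis using rank_card_indpt[OF A S] by simp
qed

end

lemma bit_add_eq0: "(a::bit) + b = 0 \<Longrightarrow> a = b"
  by (cases a; cases b) simp_all

lemma rank_two_parts:
  fixes A :: "bit mat"
  assumes A: "A \<in> carrier_mat n nc" and c1: "c1 < nc" "c1 \<in> C1" and c2: "c2 < nc" "c2 \<notin> C1"
    and s1: "\<And>r. r < n \<Longrightarrow> (\<Sum>c\<in>{c. c < nc \<and> c \<in> C1}. A $$ (r, c)) = 0"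
    and s2: "\<And>r. r < n \<Longrightarrow> (\<Sum>c\<in>{c. c < nc \<and> c \<notin> C1}. A $$ (r, c)) = 0"
  shows "vec_space.rank n A \<le> nc - 2"
proof -
  interpret vec_space "TYPE(bit)" n .
  define W where "W = col A ` ({..<nc} - {c1, c2})"
  have Wc: "W \<subseteq> carrier_vec n" unfolding W_def using A by auto
  have Wf: "finite W" unfolding W_def by simp
  have "card W \<le> card ({..<nc} - {c1, c2})" unfolding W_def by (rule card_image_le) simp
  also have "\<dots> = nc - 2" using c1 c2 by (subst card_Diff_subset) (auto simp: card_insert_if)
  finally have cW: "card W \<le> nc - 2" .
  have colsum: "col A c0 \<in> span W"
    if c0: "c0 < nc" "c0 \<in> {c1, c2}" and sP: "\<And>r. r < n \<Longrightarrow> (\<Sum>c\<in>{c. c < nc \<and> P c}. A $$ (r, c)) = 0"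
      and Pc0: "P c0" and Pn: "\<not> (P c1 \<and> P c2)" for c0 P
  proof -
    define xs where "xs = map (col A) (filter (\<lambda>c. P c \<and> c \<noteq> c0) [0..<nc])"
    have xsW: "x \<in> span W" if "x \<in> set xs" for x
    proof -
      from that obtain c where c: "c < nc" "P c" "c \<noteq> c0" "x = col A c" unfolding xs_def by auto
      have "c \<notin> {c1, c2}" using c c0 Pc0 Pn by auto
      then have "x \<in> W" unfolding W_def using c by auto
      then show ?thesis using in_own_span[OF Wc] by auto
    qed
    have xsc: "x \<in> carrier_vec n" if "x \<in> set xs" for x using that A unfolding xs_def by auto
    have "col A c0 = sumlist xs"
    proof (rule eq_vecI)
      show "dim_vec (col A c0) = dim_vec (sumlist xs)" using A xsc by (simp add: sumlist_dim)
      fix r assume "r < dim_vec (sumlist xs)"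
      then have r: "r < n" using xsc by (simp add: sumlist_dim)
      have "sumlist xs $ r = sum_list (map (\<lambda>x. x $ r) xs)" using sumlist_vec_index[OF xsc r] by simp
      also have "\<dots> = (\<Sum>c\<in>{c. c < nc \<and> P c \<and> c \<noteq> c0}. A $$ (r, c))"
      proof -
        have "sum_list (map (\<lambda>x. x $ r) xs) = sum_list (map (\<lambda>c. col A c $ r) (filter (\<lambda>c. P c \<and> c \<noteq> c0) [0..<nc]))"
          unfolding xs_def by (simp add: o_def)
        also have "\<dots> = (\<Sum>c\<in>set (filter (\<lambda>c. P c \<and> c \<noteq> c0) [0..<nc]). col A c $ r)"
          by (rule sum_list_distinct_conv_sum_set) simp
        also have "set (filter (\<lambda>c. P c \<and> c \<noteq> c0) [0..<nc]) = {c. c < nc \<and> P c \<and> c \<noteq> c0}" by auto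
        also have "(\<Sum>c\<in>{c. c < nc \<and> P c \<and> c \<noteq> c0}. col A c $ r) = (\<Sum>c\<in>{c. c < nc \<and> P c \<and> c \<noteq> c0}. A $$ (r, c))"
          using A r by (intro sum.cong) auto
        finally show ?thesis .
      qed
      finally have e1: "sumlist xs $ r = (\<Sum>c\<in>{c. c < nc \<and> P c \<and> c \<noteq> c0}. A $$ (r, c))" .
      have "{c. c < nc \<and> P c} = insert c0 {c. c < nc \<and> P c \<and> c \<noteq> c0}" using c0 Pc0 by auto
      then have "A $$ (r, c0) + (\<Sum>c\<in>{c. c < nc \<and> P c \<and> c \<noteq> c0}. A $$ (r, c)) = 0"
        using sP[OF r] by simp
      then have "A $$ (r, c0) = (\<Sum>c\<in>{c. c < nc \<and> P c \<and> c \<noteq> c0}. A $$ (r, c))"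
        by (rule bit_add_eq0)
      then show "col A c0 $ r = sumlist xs $ r" using e1 A r c0 by simp
    qed
    then show ?thesis using sumlist_in_span[OF Wc xsW] by simp
  qed
  have "set (cols A) \<subseteq> span W"
  proof
    fix x assume "x \<in> set (cols A)"
    then obtain c where c: "c < nc" "x = col A c" using A by (auto simp: cols_def)
    show "x \<in> span W"
    proof (cases "c = c1")
      case True
      show ?thesis using colsum[of c "\<lambda>c. c \<in> C1"] c c1 c2 s1 True by auto
    next
      case False
      show ?thesis
      proof (cases "c = c2")
        case True
        show ?thesis using colsum[of c "\<lambda>c. c \<notin> C1"] c c1 c2 s2 True by auto
      next
        case False
        then have "x \<in> W" using c \<open>c \<noteq> c1\<close> unfolding W_def by auto
        then show ?thesis using in_own_span[OF Wc] by auto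
      qed
    qed
  qed
  then have "rank A \<le> card W" using rank_le_span_card[OF A Wc Wf] by simp
  then show ?thesis using cW by simp
qed

lemma sum_int_mult:
  assumes "finite S" "\<And>i. i \<in> S \<Longrightarrow> \<exists>m::int. f i = pi * of_int m"
  shows "\<exists>m::int. sum f S = pi * of_int m"
  using assms
proof (induction S rule: finite_induct)
  case empty
  then show ?case by (intro exI[of _ 0]) simp
next
  case (insert x F)
  obtain m1 :: int where "f x = pi * of_int m1" using insert by blast
  moreover obtain m2 :: int where "sum f F = pi * of_int m2" using insert by blast
  ultimately have "sum f (insert x F) = pi * of_int (m1 + m2)" using insert by (simp add: algebra_simps)
  then show ?case by blast
qed

lemma L_even:
  assumes Npos: "N > 0" and fin: "finite X" and cX: "card X = N" and sub: "X \<subseteq> {0..<pi}"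
    and rep: "\<And>x. x \<in> X \<Longrightarrow> \<exists>k m::int. x = th + of_int k * pi / real N + pi * of_int m"
  shows "evenly_spaced N X"
proof -
  let ?f = "\<lambda>k. rmod (th + real k * pi / real N) pi"
  have "X \<subseteq> ?f ` {..<N}"
  proof
    fix x assume xX: "x \<in> X"
    obtain k m :: int where x: "x = th + of_int k * pi / real N + pi * of_int m" using rep[OF xX] by blast
    define r where "r = k mod int N"
    define q where "q = k div int N"
    have r0: "0 \<le> r" "r < int N" unfolding r_def using Npos by simp_all
    have kq: "k = q * int N + r" unfolding q_def r_def by simp
    have "of_int k * pi / real N = of_int r * pi / real N + pi * of_int q"
      unfolding kq using Npos by (simp add: field_simps)
    then have "x = (th + real (nat r) * pi / real N) + pi * of_int (q + m)" using x r0 by (simp add: algebra_simps)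
    then have "rmod x pi = ?f (nat r)" by (simp only: rmod_add_int[OF pi_gt_zero])
    moreover have "rmod x pi = x" using sub xX by (intro rmod_id) auto
    moreover have "nat r < N" using r0 by simp
    ultimately show "x \<in> ?f ` {..<N}" by force
  qed
  moreover have "card (?f ` {..<N}) \<le> card X" using cX card_image_le[of "{..<N}" ?f] by simp
  ultimately have "X = ?f ` {..<N}" by (intro card_seteq) auto
  then show ?thesis unfolding evenly_spaced_def by blast
qed

lemma row_sum_zero:
  fixes N j k :: nat
  assumes j: "j < N" and k: "k < N" and P: "P j \<longleftrightarrow> P (N + k)"
  shows "(\<Sum>c\<in>{c. c < 2 * N \<and> P c}. (if c = j \<or> c = N + k then (1::bit) else 0)) = 0"
proof -
  have "(\<Sum>c\<in>{c. c < 2 * N \<and> P c}. (if c = j \<or> c = N + k then (1::bit) else 0))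
      = (\<Sum>c\<in>{c. c < 2 * N \<and> P c} \<inter> {j, N + k}. 1)"
    by (subst sum.inter_restrict) (auto intro!: sum.cong)
  also have "\<dots> = 0"
  proof (cases "P j")
    case True
    then have "{c. c < 2 * N \<and> P c} \<inter> {j, N + k} = {j, N + k}" using j k P by auto
    then show ?thesis using j by simp
  next
    case False
    then have "{c. c < 2 * N \<and> P c} \<inter> {j, N + k} = {}" using P by auto
    then show ?thesis by simp
  qed
  finally show ?thesis .
qed


definition Dg :: "real \<Rightarrow> bool \<Rightarrow> bool \<Rightarrow> complex" where
  "Dg al x y = (if x = y then (if x then cis al else 1) else 0)"

lemma conjop_Dg: "conjop (Dg al) (Emat ph) = Emat (ph + al)"
proof (intro ext)
  fix x y
  show "conjop (Dg al) (Emat ph) x y = Emat (ph + al) x y"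
    unfolding conjop_def sumbool Dg_def Emat_def
    by (cases x; cases y) (simp_all add: cis_cnj cis_mult algebra_simps)
qed

lemma cis_pm_rmod:
  assumes "cis a = cis b \<or> cis a = - cis b"
  shows "rmod a pi = rmod b pi"
proof -
  have "sin (a - b) = 0"
    using assms
  proof
    assume "cis a = cis b"
    then have "cos a = cos b" "sin a = sin b" using cis.sel[of a] cis.sel[of b] by metis+
    then show ?thesis by (simp add: sin_diff mult.commute)
  next
    assume "cis a = - cis b"
    then have "cos a = - cos b" "sin a = - sin b" using cis.sel[of a] cis.sel[of b]
      by (metis uminus_complex.sel)+
    then show ?thesis by (simp add: sin_diff mult.commute)
  qed
  then obtain m :: int where "a - b = pi * of_int m" using sin_zero_int by blast
  then show ?thesis using rmod_eq_iff[OF pi_gt_zero] by blast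
qed

lemma angle_image_Dg: "angle_image (Dg al) M = (\<lambda>ph. rmod (ph + al) pi) ` M"
proof
  show "angle_image (Dg al) M \<subseteq> (\<lambda>ph. rmod (ph + al) pi) ` M"
  proof
    fix v assume "v \<in> angle_image (Dg al) M"
    then obtain ph ph' where v: "v = rmod ph' pi" "ph \<in> M"
      and e: "Emat (ph + al) = Emat ph' \<or> Emat (ph + al) = (\<lambda>x y. - Emat ph' x y)"
      unfolding angle_image_def conjop_Dg by blast
    from e have "cis (ph + al) = cis ph' \<or> cis (ph + al) = - cis ph'"
    proof
      assume "Emat (ph + al) = Emat ph'"
      then have "Emat (ph + al) True False = Emat ph' True False" by simp
      then show ?thesis unfolding Emat_def by simp
    next
      assume "Emat (ph + al) = (\<lambda>x y. - Emat ph' x y)"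
      then have "Emat (ph + al) True False = - Emat ph' True False" by metis
      then show ?thesis unfolding Emat_def by simp
    qed
    then have "rmod (ph + al) pi = rmod ph' pi" by (rule cis_pm_rmod)
    then show "v \<in> (\<lambda>ph. rmod (ph + al) pi) ` M" using v by (metis image_eqI)
  qed
next
  show "(\<lambda>ph. rmod (ph + al) pi) ` M \<subseteq> angle_image (Dg al) M"
    unfolding angle_image_def conjop_Dg by blast
qed

lemma unitary_Dg: "unitary2 (Dg al)"
  unfolding unitary2_def sumbool Dg_def
  by (auto simp: cis_cnj cis_mult)

lemma relabel_id: "relabel id psi = psi"
  unfolding relabel_def by (intro ext) simp

lemma apply3_Dg: "apply3 (Dg (- th)) (Dg th) (Dg 0) (Bstate lam) = Bstate lam"
proof (intro ext)
  fix x y z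
  show "apply3 (Dg (- th)) (Dg th) (Dg 0) (Bstate lam) x y z = Bstate lam x y z"
    unfolding apply3_def sumbool Dg_def
    by (cases x; cases y; cases z) (simp_all add: Bstate_def cis_mult)
qed

lemma equiv_part:
  assumes e1: "evenly_spaced N M1" and e2: "evenly_spaced N M2"
  shows "\<exists>mu. 0 \<le> mu \<and> mu < pi \<and> (\<exists>M3'.
            equivalent (Bstate lam) (scen M1 M2 M3) (Bstate lam)
              (scen ((\<lambda>k. real k * pi / real N) ` {..<N})
                    ((\<lambda>k. rmod (real k * pi / real N + mu) pi) ` {..<N}) M3'))"
proof -
  obtain t1 where t1: "M1 = (\<lambda>k. rmod (t1 + real k * pi / real N) pi) ` {..<N}"
    using e1 unfolding evenly_spaced_def by blast
  obtain t2 where t2: "M2 = (\<lambda>k. rmod (t2 + real k * pi / real N) pi) ` {..<N}"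
    using e2 unfolding evenly_spaced_def by blast
  define mu where "mu = rmod (t1 + t2) pi"
  have mu: "0 \<le> mu" "mu < pi" unfolding mu_def using rmod_range[OF pi_gt_zero] by auto
  define U where "U = (\<lambda>i::nat. if i = 0 then Dg (- t1) else if i = 1 then Dg t1 else Dg 0)"
  define M3' where "M3' = angle_image (Dg 0) M3"
  have kpi: "real k * pi / real N < pi" if "k < N" for k
  proof -
    have "real k / real N < 1" using that by simp
    then have "real k / real N * pi < 1 * pi" by (intro mult_strict_right_mono) auto
    then show ?thesis by simp
  qed
  have kpi0: "0 \<le> real k * pi / real N" for k by simp
  have A0: "angle_image (U 0) M1 = (\<lambda>k. real k * pi / real N) ` {..<N}"
  proof -
    have "angle_image (U 0) M1 = (\<lambda>k. rmod (rmod (t1 + real k * pi / real N) pi + - t1) pi) ` {..<N}"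
      unfolding U_def t1 by (simp add: angle_image_Dg image_image)
    also have "\<dots> = (\<lambda>k. real k * pi / real N) ` {..<N}"
    proof (intro image_cong refl)
      fix k assume "k \<in> {..<N}"
      then show "rmod (rmod (t1 + real k * pi / real N) pi + - t1) pi = real k * pi / real N"
      proof -
        have "rmod (rmod (t1 + real k * pi / real N) pi + - t1) pi = rmod (t1 + real k * pi / real N + - t1) pi"
          by (rule rmod_rmod_add[OF pi_gt_zero])
        also have "\<dots> = real k * pi / real N" using rmod_id[OF kpi0 kpi] \<open>k \<in> {..<N}\<close> by simp
        finally show ?thesis .
      qed
    qed
    finally show ?thesis .
  qed
  have A1: "angle_image (U 1) M2 = (\<lambda>k. rmod (real k * pi / real N + mu) pi) ` {..<N}"
  proof -
    have "angle_image (U 1) M2 = (\<lambda>k. rmod (rmod (t2 + real k * pi / real N) pi + t1) pi) ` {..<N}"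
      unfolding U_def t2 by (simp add: angle_image_Dg image_image)
    also have "\<dots> = (\<lambda>k. rmod (real k * pi / real N + mu) pi) ` {..<N}"
    proof (intro image_cong refl)
      fix k assume "k \<in> {..<N}"
      have "rmod (real k * pi / real N + mu) pi = rmod (mu + real k * pi / real N) pi" by (simp add: add.commute)
      also have "\<dots> = rmod (t1 + t2 + real k * pi / real N) pi" unfolding mu_def by (rule rmod_rmod_add[OF pi_gt_zero])
      also have "\<dots> = rmod (t2 + real k * pi / real N + t1) pi" by (simp add: algebra_simps)
      also have "\<dots> = rmod (rmod (t2 + real k * pi / real N) pi + t1) pi"
        by (rule rmod_rmod_add[OF pi_gt_zero, symmetric])
      finally show "rmod (rmod (t2 + real k * pi / real N) pi + t1) pi = rmod (real k * pi / real N + mu) pi" by simp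
    qed
    finally show ?thesis .
  qed
  have "equivalent (Bstate lam) (scen M1 M2 M3) (Bstate lam)
              (scen ((\<lambda>k. real k * pi / real N) ` {..<N})
                    ((\<lambda>k. rmod (real k * pi / real N + mu) pi) ` {..<N}) M3')"
    unfolding equivalent_def
  proof (intro exI[of _ id] exI[of _ U] conjI allI impI)
    show "id permutes {0, 1, 2::nat}" by (rule permutes_id)
    show "unitary2 (U i)" for i unfolding U_def by (simp add: unitary_Dg)
    show "apply3 (U 0) (U 1) (U 2) (relabel id (Bstate lam)) = Bstate lam"
      unfolding U_def relabel_id by (simp add: apply3_Dg)
    fix i :: nat assume "i < 3"
    then have "i = 0 \<or> i = 1 \<or> i = 2" by auto
    then show "angle_image (U i) (scen M1 M2 M3 (inv_into UNIV id i)) =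
      scen ((\<lambda>k. real k * pi / real N) ` {..<N}) ((\<lambda>k. rmod (real k * pi / real N + mu) pi) ` {..<N}) M3' i"
      using A0 A1 unfolding scen_def M3'_def by (auto simp: inv_id U_def)
  qed
  then show ?thesis using mu by blast
qed

lemma main_even:
  assumes reg: "N_regular N lam M1 M2 M3" and Npos: "N > 0"
  shows "evenly_spaced N M1 \<and> evenly_spaced N M2"
proof -
  from reg have l0: "0 \<le> lam" and l1: "lam < pi / 2" and ms: "meas_scenario M1 M2 M3"
    and mi: "max_impossible lam M1 M2 M3" and cM1: "card M1 = N" and cM2: "card M2 = N"
    and ex: "\<exists>As Bs Cs. bij_betw As {..<N} M1 \<and> bij_betw Bs {..<N} M2 \<and> bij_betw Cs {..<2} M3 \<and>
        max_rank lam N As Bs Cs"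
    unfolding N_regular_def by auto
  from ex obtain As Bs Cs where bA: "bij_betw As {..<N} M1" and bB: "bij_betw Bs {..<N} M2"
    and bC: "bij_betw Cs {..<2} M3" and mr: "max_rank lam N As Bs Cs" by blast
  have f1: "finite M1" "M1 \<subseteq> {0..<pi}" and f2: "finite M2" "M2 \<subseteq> {0..<pi}"
    using ms unfolding meas_scenario_def by auto
  have AsM: "As j \<in> M1" if "j < N" for j using bA that by (auto simp: bij_betw_def)
  have BsM: "Bs j \<in> M2" if "j < N" for j using bB that by (auto simp: bij_betw_def)
  have CsM: "Cs l \<in> M3" if "l < 2" for l using bC that by (auto simp: bij_betw_def)
  have AsR: "0 \<le> As j" "As j < pi" if "j < N" for j using AsM[OF that] f1 by auto
  have BsR: "0 \<le> Bs j" "Bs j < pi" if "j < N" for j using BsM[OF that] f2 by auto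
  have Ainj: "inj_on As {..<N}" and Binj: "inj_on Bs {..<N}" using bA bB by (auto simp: bij_betw_def)
  have M1im: "M1 = As ` {..<N}" and M2im: "M2 = Bs ` {..<N}" using bA bB by (auto simp: bij_betw_def)
  define g where "g l = beta lam (Cs l + obit False)" for l
  have Kex: "\<exists>k<N. \<exists>m::int. As j + Bs k - g l = pi * of_int m" if j: "j < N" and l: "l < 2" for j l
  proof -
    have "\<forall>A\<in>M1. \<exists>B\<in>M2. \<exists>a b. impossible (Bstate lam) A B (Cs l) a b False"
      using mi CsM[OF l] unfolding max_impossible_def by simp
    then have "\<exists>B\<in>M2. \<exists>a b. impossible (Bstate lam) (As j) B (Cs l) a b False"
      using AsM[OF j] by (rule bspec)
    then obtain B a b where B: "B \<in> M2" "impossible (Bstate lam) (As j) B (Cs l) a b False"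
      by (elim bexE exE) (rule that)
    obtain m :: int where m: "As j + B - beta lam (Cs l + obit False) = pi * of_int m"
      using imp_beta[OF l0 l1 B(2)] by blast
    obtain k where k: "k < N" "B = Bs k" using B(1) M2im by auto
    show ?thesis using m k unfolding g_def by blast
  qed
  have Kun: "k = k'" if H: "k < N" "k' < N" "\<exists>m::int. As j + Bs k - g l = pi * of_int m"
      "\<exists>m::int. As j + Bs k' - g l = pi * of_int m" for j l k k'
  proof -
    obtain m m' :: int where "As j + Bs k - g l = pi * of_int m" "As j + Bs k' - g l = pi * of_int m'"
      using H by blast
    then have "Bs k - Bs k' = pi * of_int (m - m')" by (simp add: algebra_simps)
    then have "Bs k = Bs k'" by (rule modpi_eq[OF BsR(1)[OF H(1)] BsR(2)[OF H(1)] BsR(1)[OF H(2)] BsR(2)[OF H(2)]])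
    then show ?thesis using Binj H by (auto dest: inj_onD)
  qed
  define K where "K l j = Kidx lam N As Bs Cs j l False" for l j
  have KP: "K l j < N \<and> (\<exists>m::int. As j + Bs (K l j) - g l = pi * of_int m)" if j: "j < N" and l: "l < 2" for j l
  proof -
    obtain k0 where k0: "k0 < N" "\<exists>m::int. As j + Bs k0 - g l = pi * of_int m"
      using Kex[OF j l] by blast
    have ex1: "\<exists>!k. k < N \<and> (\<exists>m::int. As j + Bs k - g l = pi * of_int m)"
    proof (rule ex1I[of _ k0])
      show "k0 < N \<and> (\<exists>m::int. As j + Bs k0 - g l = pi * of_int m)" using k0 by blast
      fix k assume kk: "k < N \<and> (\<exists>m::int. As j + Bs k - g l = pi * of_int m)"
      show "k = k0" using Kun[of k k0 j l] kk k0 by blast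
    qed
    show ?thesis using theI'[OF ex1] unfolding K_def Kidx_def g_def by simp
  qed
  have Kinj: "j = j'" if H: "l < 2" "j < N" "j' < N" "K l j = K l j'" for l j j'
  proof -
    obtain m m' :: int where "As j + Bs (K l j) - g l = pi * of_int m" "As j' + Bs (K l j') - g l = pi * of_int m'"
      using KP[OF H(2) H(1)] KP[OF H(3) H(1)] by blast
    then have "As j - As j' = pi * of_int (m - m')" using H(4) by (simp add: algebra_simps)
    then have "As j = As j'" by (rule modpi_eq[OF AsR(1)[OF H(2)] AsR(2)[OF H(2)] AsR(1)[OF H(3)] AsR(2)[OF H(3)]])
    then show ?thesis using Ainj H by (auto dest: inj_onD)
  qed
  have Ksurj: "K l ` {..<N} = {..<N}" if l: "l < 2" for l
  proof (rule endo_inj_surj)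
    show "K l ` {..<N} \<subseteq> {..<N}" using KP l by auto
    show "inj_on (K l) {..<N}" using Kinj l by (auto intro: inj_onI)
  qed simp
  define d where "d = g 1 - g 0"
  have shift: "\<exists>m::int. As j = As i + d + pi * of_int m" if H: "i < N" "j < N" "K 0 i = K 1 j" for i j
  proof -
    obtain m1 m2 :: int where "As i + Bs (K 0 i) - g 0 = pi * of_int m1" "As j + Bs (K 1 j) - g 1 = pi * of_int m2"
      using KP[OF H(1), of 0] KP[OF H(2), of 1] by auto
    then have "As j = As i + d + pi * of_int (m2 - m1)" using H(3) unfolding d_def by (simp add: algebra_simps)
    then show ?thesis by blast
  qed
  define Ob where "Ob = {j. j < N \<and> (\<exists>k::nat. \<exists>m::int. As j = As 0 + real k * d + pi * of_int m)}"
  have O0: "0 \<in> Ob" unfolding Ob_def using Npos by (auto intro!: exI[of _ 0])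
  have ON: "j < N" if "j \<in> Ob" for j using that unfolding Ob_def by auto
  have Oback: "j \<in> Ob" if H: "i \<in> Ob" "j < N" "K 0 i = K 1 j" for i j
  proof -
    obtain k :: nat and m :: int where i: "i < N" "As i = As 0 + real k * d + pi * of_int m"
      using H(1) unfolding Ob_def by auto
    obtain m' :: int where "As j = As i + d + pi * of_int m'" using shift[OF i(1) H(2,3)] by blast
    then have "As j = As 0 + real (Suc k) * d + pi * of_int (m + m')" using i by (simp add: algebra_simps)
    then show ?thesis unfolding Ob_def using H(2) by blast
  qed
  define tau where "tau i = (SOME j. j < N \<and> K 1 j = K 0 i)" for i
  have tauP: "tau i < N \<and> K 1 (tau i) = K 0 i" if i: "i < N" for i
  proof -
    have "K 0 i \<in> K 1 ` {..<N}" using Ksurj[of 1] KP[OF i, of 0] by auto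
    then have "\<exists>j. j < N \<and> K 1 j = K 0 i" by auto
    then show ?thesis unfolding tau_def by (rule someI_ex)
  qed
  have tauinj: "inj_on tau {..<N}"
  proof (rule inj_onI)
    fix i i' assume "i \<in> {..<N}" "i' \<in> {..<N}" "tau i = tau i'"
    then have "K 0 i = K 0 i'" using tauP[of i] tauP[of i'] \<open>i \<in> {..<N}\<close> \<open>i' \<in> {..<N}\<close> by (simp (no_asm_use)) metis
    then show "i = i'" using Kinj[of 0 i i'] \<open>i \<in> {..<N}\<close> \<open>i' \<in> {..<N}\<close> by simp
  qed
  have Osub: "Ob \<subseteq> {..<N}" using ON by auto
  have tauO: "tau ` Ob = Ob"
  proof (rule endo_inj_surj)
    show "finite Ob" using Osub finite_lessThan by (rule finite_subset)
    show "tau ` Ob \<subseteq> Ob"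
    proof (rule image_subsetI)
      fix i assume iO: "i \<in> Ob"
      show "tau i \<in> Ob" using Oback[of i "tau i"] tauP[OF ON[OF iO]] iO by simp
    qed
    show "inj_on tau Ob" using tauinj Osub by (rule inj_on_subset)
  qed
  have key: "j \<in> Ob \<longleftrightarrow> (\<exists>i\<in>Ob. K 0 i = K 1 j)" if j: "j < N" for j
  proof
    assume "j \<in> Ob"
    then have "j \<in> tau ` Ob" using tauO by simp
    then obtain i where iO: "i \<in> Ob" and ji: "j = tau i" by (rule imageE)
    then show "\<exists>i\<in>Ob. K 0 i = K 1 j" using tauP[OF ON[OF iO]] by auto
  next
    assume "\<exists>i\<in>Ob. K 0 i = K 1 j"
    then show "j \<in> Ob" using Oback j by blast
  qed
  have Oall: "j \<in> Ob" if j0: "j < N" for j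
  proof (rule ccontr)
    assume jO: "j \<notin> Ob"
    define Q where "Q c = ((c < N \<and> c \<in> Ob) \<or> (N \<le> c \<and> (\<exists>i\<in>Ob. K 0 i = c - N)))" for c
    let ?A = "coeff_mat lam N As Bs Cs False False"
    have Acar: "?A \<in> carrier_mat (2 * N) (2 * N)" unfolding coeff_mat_def by simp
    have entry: "?A $$ (r, c) = (if c = r mod N \<or> c = N + K (r div N) (r mod N) then 1 else 0)"
      if "r < 2 * N" "c < 2 * N" for r c
      using that unfolding coeff_mat_def K_def by (simp add: Let_def)
    have rowP: "Q (r mod N) \<longleftrightarrow> Q (N + K (r div N) (r mod N))" if r: "r < 2 * N" for r
    proof -
      have rm: "r mod N < N" using Npos by simp
      have rd: "r div N < 2" using r Npos by (simp add: less_mult_imp_div_less mult.commute)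
      have q1: "Q (r mod N) \<longleftrightarrow> r mod N \<in> Ob" unfolding Q_def using rm by simp
      have q2: "Q (N + K (r div N) (r mod N)) \<longleftrightarrow> (\<exists>i\<in>Ob. K 0 i = K (r div N) (r mod N))"
        unfolding Q_def by simp
      show ?thesis
      proof (cases "r div N = 0")
        case True
        have "(\<exists>i\<in>Ob. K 0 i = K 0 (r mod N)) \<longleftrightarrow> r mod N \<in> Ob"
          using Kinj[of 0 _ "r mod N"] rm ON by auto
        then show ?thesis using q1 q2 True by simp
      next
        case False
        then have "r div N = 1" using rd by simp
        then show ?thesis using q1 q2 key[OF rm] by simp
      qed
    qed
    have Kr: "K (r div N) (r mod N) < N" if r: "r < 2 * N" for r
      using KP[of "r mod N" "r div N"] Npos r by (simp add: less_mult_imp_div_less mult.commute)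
    have s1: "(\<Sum>c\<in>{c. c < 2 * N \<and> c \<in> Collect Q}. ?A $$ (r, c)) = 0" if r: "r < 2 * N" for r
    proof -
      have "(\<Sum>c\<in>{c. c < 2 * N \<and> c \<in> Collect Q}. ?A $$ (r, c))
          = (\<Sum>c\<in>{c. c < 2 * N \<and> Q c}. (if c = r mod N \<or> c = N + K (r div N) (r mod N) then (1::bit) else 0))"
        using entry r by (intro sum.cong) auto
      also have "\<dots> = 0" using row_sum_zero[of "r mod N" N "K (r div N) (r mod N)" Q] rowP[OF r] Kr[OF r] Npos
        by simp
      finally show ?thesis .
    qed
    have s2: "(\<Sum>c\<in>{c. c < 2 * N \<and> c \<notin> Collect Q}. ?A $$ (r, c)) = 0" if r: "r < 2 * N" for r
    proof -
      have "(\<Sum>c\<in>{c. c < 2 * N \<and> c \<notin> Collect Q}. ?A $$ (r, c))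
          = (\<Sum>c\<in>{c. c < 2 * N \<and> \<not> Q c}. (if c = r mod N \<or> c = N + K (r div N) (r mod N) then (1::bit) else 0))"
        using entry r by (intro sum.cong) auto
      also have "\<dots> = 0" using row_sum_zero[of "r mod N" N "K (r div N) (r mod N)" "\<lambda>c. \<not> Q c"] rowP[OF r] Kr[OF r] Npos
        by simp
      finally show ?thesis .
    qed
    have "vec_space.rank (2 * N) ?A \<le> 2 * N - 2"
      by (rule rank_two_parts[OF Acar, of 0 "Collect Q" j]) (use Npos O0 j0 jO s1 s2 in \<open>auto simp: Q_def\<close>)
    moreover have "vec_space.rank (2 * N) ?A = 2 * N - 1" using mr unfolding max_rank_def by blast
    ultimately show False using Npos by simp
  qed
  have taubij: "tau ` {..<N} = {..<N}"
    by (rule endo_inj_surj) (use tauP tauinj in auto)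
  obtain M :: int where NM: "real N * d = pi * of_int M"
  proof -
    have each: "\<exists>m::int. As (tau i) - As i - d = pi * of_int m" if H: "i \<in> {..<N}" for i
    proof -
      obtain m :: int where "As (tau i) = As i + d + pi * of_int m" using shift[of i "tau i"] tauP H by auto
      then show ?thesis by (intro exI[of _ m]) simp
    qed
    obtain m :: int where m: "(\<Sum>i<N. As (tau i) - As i - d) = pi * of_int m"
      using sum_int_mult[of "{..<N}" "\<lambda>i. As (tau i) - As i - d"] each by blast
    have "(\<Sum>i<N. As (tau i)) = (\<Sum>i<N. As i)"
      using sum.reindex[OF tauinj, of As] taubij by (simp add: o_def)
    then have "(\<Sum>i<N. As (tau i) - As i - d) = - real N * d"
      by (simp add: sum_subtractf)
    then have "real N * d = pi * of_int (- m)" using m by simp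
    then show ?thesis using that by blast
  qed
  have dl: "real k * d = of_int (int k * M) * pi / real N" for k
    using NM Npos by (simp add: field_simps)
  have rep1: "\<exists>k m::int. As j = As 0 + of_int k * pi / real N + pi * of_int m" if j: "j < N" for j
  proof -
    obtain k :: nat and m :: int where "As j = As 0 + real k * d + pi * of_int m"
      using Oall[OF j] unfolding Ob_def by auto
    then show ?thesis unfolding dl by blast
  qed
  have ev1: "evenly_spaced N M1"
    by (rule L_even[OF Npos f1(1) cM1 f1(2), of "As 0"]) (use rep1 M1im in auto)
  have rep2: "\<exists>k m::int. y = (g 0 - As 0) + of_int k * pi / real N + pi * of_int m" if y: "y \<in> M2" for y
  proof -
    obtain k where k: "k < N" "y = Bs k" using y M2im by auto
    have "k \<in> K 0 ` {..<N}" using Ksurj[of 0] k(1) by simp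
    then obtain j where j: "j < N" "k = K 0 j" by auto
    obtain m1 :: int where m1: "As j + Bs (K 0 j) - g 0 = pi * of_int m1" using KP[OF j(1), of 0] by auto
    obtain kk m :: int where am: "As j = As 0 + of_int kk * pi / real N + pi * of_int m" using rep1[OF j(1)] by blast
    have "y = (g 0 - As 0) + of_int (- kk) * pi / real N + pi * of_int (m1 - m)"
      using k(2) j(2) m1 am by (simp add: algebra_simps)
    then show ?thesis by blast
  qed
  have ev2: "evenly_spaced N M2"
    by (rule L_even[OF Npos f2(1) cM2 f2(2), of "g 0 - As 0"]) (use rep2 in auto)
  show ?thesis using ev1 ev2 by blast
qed


theorem lemma22:
  fixes N :: nat and lam :: real and M1 M2 M3 :: "real set"
  assumes "N_regular N lam M1 M2 M3"
  shows "evenly_spaced N M1 \<and> evenly_spaced N M2 \<and>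
         (\<exists>mu. 0 \<le> mu \<and> mu < pi \<and> (\<exists>M3'.
            equivalent (Bstate lam) (scen M1 M2 M3) (Bstate lam)
              (scen ((\<lambda>k. real k * pi / real N) ` {..<N})
                    ((\<lambda>k. rmod (real k * pi / real N + mu) pi) ` {..<N}) M3')))"
proof -
  have ev: "evenly_spaced N M1 \<and> evenly_spaced N M2"
  proof (cases "N = 0")
    case True
    have "finite M1" "finite M2" "card M1 = N" "card M2 = N"
      using assms unfolding N_regular_def meas_scenario_def by auto
    then have "M1 = {}" "M2 = {}" using True by auto
    then show ?thesis using True unfolding evenly_spaced_def by simp
  next
    case False
    then show ?thesis using main_even[OF assms] by simp
  qed
  then show ?thesis using equiv_part[of N M1 M2 lam M3] by blast
qed

end
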